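(* Consider the distributed quantized average consensus and weight-balancing algorithm described in the context on a strongly connected digraph, under the stated step-size and range conditions. Let $V(\mathbf{y})=\Vert\mathbf{y}-\bar y(0)\mathbf{1}\Vert^2$, $\tilde{\mathbf{y}}(k)=(\tilde y_i(k))_i$, and $\mathbf{L}^+(k)=\mathbf{S}^+(k)-\mathbf{A}(k)$ with $\mathbf{S}^+(k)=\mathrm{diag}(S_1^+(k),\dots,S_N^+(k))$. Then there exist finite constants $c_1,c_2>0$ such that for all $k$, $\mathbf{y}(k)^T\mathbf{L}^+(k)\tilde{\mathbf{y}}(k)\ge c_1V(\mathbf{y}(k))-c_2\Vert\boldsymbol{\epsilon}(k)\Vert_1$.
   Context: $\mathcal{G}=(\mathcal{V},\mathcal{E})$, $\mathcal{V}=\{1,\dots,N\}$, no self-loops, strongly connected; $\mathcal{N}_i^-=\{j:(j,i)\in\mathcal{E}\}$, $\mathcal{N}_i^+=\{j:(i,j)\in\mathcal{E}\}$, $d_i^+=|\mathcal{N}_i^+|$, $S_i^+(k)=\sum_{j\in\mathcal{N}_i^+}a_{ji}(k)$. Algorithm: given $q_{\min}<q_{\max}$ and initial values $y_i(0)$ with $\bar y(0)=\frac1N\sum_i y_i(0)\in[q_{\min},q_{\max}]$; $a_{ij}(0)=1$ if $j\in\mathcal{N}_i^-$, else $0$. $\gamma(k)=2^{-n}$ for $2^n-1\le k\le 2^{n+1}-2$; $\alpha(k)>0$ nonincreasing with $\sum\alpha(k)=\infty$, $\sum\alpha(k)^2<\infty$. At step $k$: $b_i(k)=\sum_{j\in\mathcal{N}_i^-}a_{ij}(k)-S_i^+(k)$,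 $\boldsymbol{\epsilon}(k)=(|b_i(k)|)_i$; $n_i(k)=\mathcal{I}\{b_i(k)\ge d_i^+\gamma(k)\}$; $\tilde y_i(k)=\min\{\max\{y_i(k),q_{\min}\},q_{\max}\}$; $x_i(k)=q_{\max}$ with probability $p_i(k)=\frac{\tilde y_i(k)-q_{\min}}{q_{\max}-q_{\min}}$ and $q_{\min}$ otherwise; $a_{ij}(k+1)=a_{ij}(k)+n_j(k)\gamma(k)$ for $j\in\mathcal{N}_i^-$; $y_i(k+1)=y_i(k)+\alpha(k)\sum_{j\in\mathcal{N}_i^-}a_{ij}(k)(x_j(k)-x_i(k))+\alpha(k)b_i(k)x_i(k)$. *)

theory Defs
  imports Complex_Main
begin

text \<open>Nodes are the elements of a finite type 'n; the digraph is a set of edges E.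
  (j,i) \<in> E means an edge from j to i.\<close>

definition in_nbrs :: "('n \<times> 'n) set \<Rightarrow> 'n \<Rightarrow> 'n set" where
  "in_nbrs E i = {j. (j, i) \<in> E}"

definition out_nbrs :: "('n \<times> 'n) set \<Rightarrow> 'n \<Rightarrow> 'n set" where
  "out_nbrs E i = {j. (i, j) \<in> E}"

definition out_deg :: "('n \<times> 'n) set \<Rightarrow> 'n \<Rightarrow> nat" where
  "out_deg E i = card (out_nbrs E i)"

definition S_out :: "('n \<times> 'n) set \<Rightarrow> ('n \<Rightarrow> 'n \<Rightarrow> real) \<Rightarrow> 'n \<Rightarrow> real" where
  "S_out E a i = (\<Sum>j\<in>out_nbrs E i. a j i)"

definition imbal :: "('n \<times> 'n) set \<Rightarrow> ('n \<Rightarrow> 'n \<Rightarrow> real) \<Rightarrow> 'n \<Rightarrow> real" where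
  "imbal E a i = (\<Sum>j\<in>in_nbrs E i. a i j) - S_out E a i"

text \<open>gamma(k) = 2^(-n) for 2^n - 1 \<le> k \<le> 2^(n+1) - 2.\<close>
definition gamma :: "nat \<Rightarrow> real" where
  "gamma k = 1 / 2 ^ (LEAST n. k + 1 < 2 ^ (n + 1))"

definition nflag :: "('n \<times> 'n) set \<Rightarrow> ('n \<Rightarrow> 'n \<Rightarrow> real) \<Rightarrow> nat \<Rightarrow> 'n \<Rightarrow> real" where
  "nflag E a k i = (if imbal E a i \<ge> real (out_deg E i) * gamma k then 1 else 0)"

definition clip :: "real \<Rightarrow> real \<Rightarrow> real \<Rightarrow> real" where
  "clip qmin qmax v = min (max v qmin) qmax"

definition prob_hi :: "real \<Rightarrow> real \<Rightarrow> real \<Rightarrow> real" where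
  "prob_hi qmin qmax v = (clip qmin qmax v - qmin) / (qmax - qmin)"

definition Lplus :: "('n \<times> 'n) set \<Rightarrow> ('n \<Rightarrow> 'n \<Rightarrow> real) \<Rightarrow> 'n \<Rightarrow> 'n \<Rightarrow> real" where
  "Lplus E a i j = (if i = j then S_out E a i else 0) - a i j"

end

theory Submission
  imports Defs "HOL-Analysis.Analysis"
begin

lemma gamma_bounds:
  shows "1 / real (k+1) \<le> gamma k" and "gamma k < 2 / real (k+1)" and "gamma k > 0"
proof -
  define n where "n = (LEAST n. k+1 < (2::nat)^(n+1))"
  have ex: "k+1 < (2::nat)^(k+1)" by (rule less_exp)
  have h1: "k+1 < (2::nat)^(n+1)" unfolding n_def by (rule LeastI[of _ k], rule ex)
  have h2: "2^n \<le> k+1"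
  proof (cases n)
    case 0 then show ?thesis by simp
  next
    case (Suc m)
    have "\<not> (k+1 < (2::nat)^(m+1))"
      using not_less_Least[of m "\<lambda>n. k+1 < (2::nat)^(n+1)"] Suc n_def by simp
    then show ?thesis using Suc by simp
  qed
  have g: "gamma k = 1 / 2^n" unfolding gamma_def n_def by simp
  have r1: "real (k+1) < 2 * 2^n" using h1 by (metis of_nat_less_iff of_nat_numeral of_nat_power power_Suc Suc_eq_plus1)
  have r2: "2^n \<le> real (k+1)" using h2 by (metis of_nat_le_iff of_nat_numeral of_nat_power)
  show "1 / real (k+1) \<le> gamma k" unfolding g
    by (rule divide_left_mono) (use r2 in auto)
  show "gamma k < 2 / real (k+1)" unfolding g using r1
    by (simp add: field_simps)
  show "gamma k > 0" unfolding g by simp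
qed

lemma nflag_01: "nflag E a k j = 0 \<or> nflag E a k j = 1"
  unfolding nflag_def by simp

lemma zero_sum_bound:
  fixes v :: "'n::finite \<Rightarrow> real"
  assumes "(\<Sum>l\<in>UNIV. v l) = 0" and "\<And>l. v l \<ge> - c" and "c \<ge> 0"
  shows "\<bar>v i\<bar> \<le> real (card (UNIV::'n set)) * c"
proof -
  have s: "v i = - (\<Sum>l\<in>UNIV - {i}. v l)"
    using assms(1) sum.remove[of UNIV i v] by simp
  have "(\<Sum>l\<in>UNIV - {i}. v l) \<ge> (\<Sum>l\<in>UNIV - {i}. - c)"
    by (rule sum_mono) (use assms(2) in auto)
  also have "(\<Sum>l\<in>UNIV - {i}. - c) = - ((real (card (UNIV::'n set)) - 1) * c)"
  proof -
    have c1: "card (UNIV::'n set) \<ge> 1" using card_gt_0_iff[of "UNIV::'n set"] by simp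
    have "card (UNIV - {i}) = card (UNIV::'n set) - 1" by (simp add: card_Diff_singleton)
    then show ?thesis using c1 by (simp add: of_nat_diff algebra_simps)
  qed
  finally have up: "v i \<le> (real (card (UNIV::'n set)) - 1) * c" using s by linarith
  have "v i \<ge> -c" by (rule assms(2))
  moreover have "real (card (UNIV::'n set)) \<ge> 1"
    using card_gt_0_iff[of "UNIV::'n set"] by simp
  ultimately have "1 * c \<le> real (card (UNIV::'n set)) * c" using assms(3)
    by (intro mult_right_mono) auto
  then show ?thesis using up \<open>v i \<ge> -c\<close> assms(3) by (simp add: abs_le_iff algebra_simps)
qed

locale alg =
  fixes E :: "('n::finite \<times> 'n) set"
    and qmin qmax :: real
    and alpha :: "nat \<Rightarrow> real"
    and a :: "nat \<Rightarrow> 'n \<Rightarrow> 'n \<Rightarrow> real"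
    and y x :: "nat \<Rightarrow> 'n \<Rightarrow> real"
  assumes sc: "\<forall>i j. (i, j) \<in> E\<^sup>*"
    and q_lt: "qmin < qmax"
    and avg1: "qmin \<le> (\<Sum>i\<in>UNIV. y 0 i) / real (card (UNIV :: 'n set))"
    and avg2: "(\<Sum>i\<in>UNIV. y 0 i) / real (card (UNIV :: 'n set)) \<le> qmax"
    and alpha_pos: "\<forall>k. alpha k > 0"
    and alpha_noninc: "\<forall>k. alpha (Suc k) \<le> alpha k"
    and alpha_sq: "summable (\<lambda>k. (alpha k)\<^sup>2)"
    and a_init: "\<forall>i j. a 0 i j = (if j \<in> in_nbrs E i then 1 else 0)"
    and a_step: "\<forall>k i j. a (Suc k) i j =
        (if j \<in> in_nbrs E i then a k i j + nflag E (a k) k j * gamma k else a k i j)"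
    and x_vals: "\<forall>k i. x k i = qmin \<or> x k i = qmax"
    and x_hi_supp: "\<forall>k i. x k i = qmax \<longrightarrow> prob_hi qmin qmax (y k i) > 0"
    and x_lo_supp: "\<forall>k i. x k i = qmin \<longrightarrow> prob_hi qmin qmax (y k i) < 1"
    and y_step: "\<forall>k i. y (Suc k) i = y k i
        + alpha k * (\<Sum>j\<in>in_nbrs E i. a k i j * (x k j - x k i))
        + alpha k * imbal E (a k) i * x k i"
    and outne: "\<forall>j. out_nbrs E j \<noteq> {}"
begin

abbreviation "b k i \<equiv> imbal E (a k) i"
abbreviation "nf k j \<equiv> nflag E (a k) k j"
abbreviation "d j \<equiv> real (out_deg E j)"

definition Fs :: "nat \<Rightarrow> 'n \<Rightarrow> real" where
  "Fs k j = (\<Sum>s<k. nf s j * gamma s)"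

lemma nf_nonneg: "nf k j \<ge> 0" and nf_le1: "nf k j \<le> 1"
  unfolding nflag_def by auto

lemma Fs_Suc: "Fs (Suc k) j = Fs k j + nf k j * gamma k"
  unfolding Fs_def by simp

lemma Fs_nonneg: "Fs k j \<ge> 0"
  unfolding Fs_def by (intro sum_nonneg mult_nonneg_nonneg nf_nonneg less_imp_le[OF gamma_bounds(3)])

lemma a_repr: "a k i j = (if j \<in> in_nbrs E i then 1 + Fs k j else 0)"
proof (induction k)
  case 0 then show ?case using a_init by (simp add: Fs_def)
next
  case (Suc k) then show ?case using a_step Fs_Suc by auto
qed

lemma a_nonneg: "a k i j \<ge> 0"
  using Fs_nonneg[of k j] by (simp add: a_repr)

lemma in_out: "j \<in> in_nbrs E i \<longleftrightarrow> i \<in> out_nbrs E j"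
  unfolding in_nbrs_def out_nbrs_def by simp

lemma d_pos: "d j \<ge> 1"
proof -
  have "finite (out_nbrs E j)" by simp
  then have "card (out_nbrs E j) > 0" using outne by (simp add: card_gt_0_iff)
  then show ?thesis unfolding out_deg_def by simp
qed

lemma S_out_repr: "S_out E (a k) i = d i * (1 + Fs k i)"
proof -
  have "S_out E (a k) i = (\<Sum>j\<in>out_nbrs E i. 1 + Fs k i)"
    unfolding S_out_def by (rule sum.cong) (auto simp: a_repr in_out)
  then show ?thesis by (simp add: out_deg_def)
qed

lemma S_out_col: "S_out E (a k) i = (\<Sum>l\<in>UNIV. a k l i)"
proof -
  have "(\<Sum>l\<in>UNIV. a k l i) = (\<Sum>l\<in>UNIV. if l \<in> out_nbrs E i then a k l i else 0)"
    by (rule sum.cong) (auto simp: a_repr in_out)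
  also have "\<dots> = (\<Sum>l\<in>UNIV \<inter> out_nbrs E i. a k l i)"
    by (rule sum.inter_restrict[symmetric]) simp
  finally show ?thesis unfolding S_out_def by simp
qed

lemma row_sum: "(\<Sum>j\<in>in_nbrs E i. f j * a k i j) = (\<Sum>j\<in>UNIV. f j * a k i j)"
proof -
  have "(\<Sum>j\<in>UNIV. f j * a k i j) = (\<Sum>j\<in>UNIV. if j \<in> in_nbrs E i then f j * a k i j else 0)"
    by (rule sum.cong) (auto simp: a_repr)
  also have "\<dots> = (\<Sum>j\<in>UNIV \<inter> in_nbrs E i. f j * a k i j)"
    by (rule sum.inter_restrict[symmetric]) simp
  finally show ?thesis by (simp only: Int_UNIV_left)
qed

lemma b_matrix: "b k i = (\<Sum>j\<in>UNIV. a k i j) - (\<Sum>l\<in>UNIV. a k l i)"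
  unfolding imbal_def S_out_col using row_sum[of "\<lambda>_. 1"] by simp

lemma b_sum0: "(\<Sum>i\<in>UNIV. b k i) = 0"
  unfolding b_matrix sum_subtractf using sum.swap[of "\<lambda>i j. a k i j" UNIV UNIV] by simp

lemma b_repr: "b k i = (\<Sum>j\<in>in_nbrs E i. 1 + Fs k j) - d i * (1 + Fs k i)"
proof -
  have "(\<Sum>j\<in>in_nbrs E i. a k i j) = (\<Sum>j\<in>in_nbrs E i. 1 + Fs k j)"
    by (rule sum.cong) (simp_all add: a_repr)
  then show ?thesis by (simp add: imbal_def S_out_repr)
qed

lemma b_Suc: "b (Suc k) i = b k i + gamma k * ((\<Sum>j\<in>in_nbrs E i. nf k j) - d i * nf k i)"
  unfolding b_repr Fs_Suc by (simp add: sum.distrib sum_distrib_left mult.commute algebra_simps)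

lemma nf_iff: "nf k j = 1 \<longleftrightarrow> b k j \<ge> d j * gamma k"
  unfolding nflag_def by simp

lemma b_Suc_ge: "b (Suc k) i \<ge> min (b k i) 0"
  and b_Suc_fire: "nf k i = 1 \<Longrightarrow> b (Suc k) i \<ge> 0"
proof -
  have s: "(\<Sum>j\<in>in_nbrs E i. nf k j) \<ge> 0" by (rule sum_nonneg) (use nf_nonneg in auto)
  have g: "gamma k > 0" by (rule gamma_bounds(3))
  show "nf k i = 1 \<Longrightarrow> b (Suc k) i \<ge> 0"
  proof -
    assume f: "nf k i = 1"
    then have "b k i \<ge> d i * gamma k" using nf_iff by simp
    moreover have "gamma k * (\<Sum>j\<in>in_nbrs E i. nf k j) \<ge> 0" using s g by simp
    ultimately show ?thesis unfolding b_Suc using f by (simp add: algebra_simps)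
  qed
  show "b (Suc k) i \<ge> min (b k i) 0"
  proof (cases "nf k i = 1")
    case True
    then have "b k i \<ge> d i * gamma k" using nf_iff by simp
    moreover have "gamma k * (\<Sum>j\<in>in_nbrs E i. nf k j) \<ge> 0" using s g by simp
    ultimately show ?thesis unfolding b_Suc using True by (simp add: algebra_simps)
  next
    case False
    then have "nf k i = 0" using nflag_01 by metis
    moreover have "gamma k * (\<Sum>j\<in>in_nbrs E i. nf k j) \<ge> 0" using s g by simp
    ultimately show ?thesis unfolding b_Suc by (simp add: min_le_iff_disj)
  qed
qed

lemma b_persist: "s \<le> t \<Longrightarrow> b t i \<ge> min (b s i) 0"
proof (induction t rule: dec_induct)
  case base then show ?case by simp
next
  case (step t) then show ?case using b_Suc_ge[of t i] by simp
qed


definition "K0 = (\<Sum>i\<in>UNIV. \<bar>b 0 i\<bar>)"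
definition "Dm = (\<Sum>j\<in>UNIV. d j)"

lemma K0_nonneg: "K0 \<ge> 0" unfolding K0_def by (simp add: sum_nonneg)

lemma d_le_Dm: "d j \<le> Dm"
  unfolding Dm_def by (rule member_le_sum) auto

lemma Dm_nonneg: "Dm \<ge> 0" using d_le_Dm[of undefined] d_pos[of undefined] by simp

lemma b_lower: "b t i \<ge> - K0"
proof -
  have "b t i \<ge> min (b 0 i) 0" using b_persist[of 0 t i] by simp
  moreover have "\<bar>b 0 i\<bar> \<le> K0" unfolding K0_def by (rule member_le_sum) auto
  ultimately show ?thesis by linarith
qed

lemma b_abs: "\<bar>b t i\<bar> \<le> real CARD('n) * K0"
  by (rule zero_sum_bound[OF b_sum0 b_lower K0_nonneg])

lemma N_ge1: "real CARD('n) \<ge> 1"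
  using card_gt_0_iff[of "UNIV::'n set"] by simp

lemma edge_ineq:
  assumes "j \<in> in_nbrs E i"
  shows "1 + Fs t j \<le> real CARD('n) * K0 + Dm * (1 + Fs t i)"
proof -
  have "1 + Fs t j \<le> (\<Sum>j'\<in>in_nbrs E i. 1 + Fs t j')"
    by (rule member_le_sum) (use assms Fs_nonneg in \<open>auto intro: add_nonneg_nonneg\<close>)
  also have "\<dots> = b t i + d i * (1 + Fs t i)" unfolding b_repr by simp
  also have "\<dots> \<le> real CARD('n) * K0 + Dm * (1 + Fs t i)"
  proof -
    have "b t i \<le> real CARD('n) * K0" using b_abs[of t i] by simp
    moreover have "d i * (1 + Fs t i) \<le> Dm * (1 + Fs t i)"
      by (rule mult_right_mono) (use d_le_Dm Fs_nonneg[of t i] in auto)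
    ultimately show ?thesis by simp
  qed
  finally show ?thesis .
qed

lemma path_ineq:
  "(j, m) \<in> E ^^ n \<Longrightarrow> 1 + Fs t j \<le> (Dm + 2) ^ n * (1 + Fs t m + real CARD('n) * K0)"
proof (induction n arbitrary: m)
  case 0 then show ?case using K0_nonneg N_ge1 by simp
next
  case (Suc n)
  from Suc.prems obtain m' where h1: "(j, m') \<in> E ^^ n" and h2: "(m', m) \<in> E"
    by (rule relpow_Suc_E)
  have e: "m' \<in> in_nbrs E m" using h2 unfolding in_nbrs_def by simp
  have ih: "1 + Fs t j \<le> (Dm + 2) ^ n * (1 + Fs t m' + real CARD('n) * K0)" by (rule Suc.IH[OF h1])
  have st: "1 + Fs t m' \<le> real CARD('n) * K0 + Dm * (1 + Fs t m)" by (rule edge_ineq[OF e])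
  have K: "real CARD('n) * K0 \<ge> 0" using K0_nonneg N_ge1 by simp
  have F: "Fs t m \<ge> 0" by (rule Fs_nonneg)
  have "1 + Fs t m' + real CARD('n) * K0 \<le> (Dm + 2) * (1 + Fs t m + real CARD('n) * K0)"
  proof -
    define G where "G = 1 + Fs t m"
    define KK where "KK = real CARD('n) * K0"
    have G0: "G \<ge> 0" using F unfolding G_def by simp
    have K0': "KK \<ge> 0" using K unfolding KK_def by simp
    have "(Dm + 2) * (G + KK) = Dm * G + Dm * KK + 2 * G + 2 * KK"
      by (simp add: algebra_simps)
    moreover have "Dm * KK \<ge> 0" using K0' Dm_nonneg by simp
    moreover have "1 + Fs t m' \<le> KK + Dm * G" using st unfolding G_def KK_def .
    ultimately have "1 + Fs t m' + KK \<le> (Dm + 2) * (G + KK)" using G0 K0' by linarith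
    then show ?thesis unfolding G_def KK_def by (simp add: add.assoc)
  qed
  then have "(Dm + 2) ^ n * (1 + Fs t m' + real CARD('n) * K0) \<le> (Dm + 2) ^ n * ((Dm + 2) * (1 + Fs t m + real CARD('n) * K0))"
    by (rule mult_left_mono) (use Dm_nonneg in simp)
  with ih have "1 + Fs t j \<le> (Dm + 2) ^ n * ((Dm + 2) * (1 + Fs t m + real CARD('n) * K0))"
    by linarith
  then show ?case by (simp add: mult.left_commute)
qed

definition "plen p q = (SOME n. (p, q) \<in> E ^^ n)"
definition "Pm = Max (range (\<lambda>pq. plen (fst pq) (snd pq)))"

lemma plen_path: "(p, q) \<in> E ^^ plen p q"
proof -
  have "\<exists>n. (p, q) \<in> E ^^ n" using sc rtrancl_power by blast
  then show ?thesis unfolding plen_def by (rule someI_ex)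
qed

lemma plen_le: "plen p q \<le> Pm"
proof -
  have "plen (fst (p,q)) (snd (p,q)) \<in> range (\<lambda>pq. plen (fst pq) (snd pq))" by blast
  then show ?thesis unfolding Pm_def by (intro Max_ge) auto
qed

definition "Gb = (Dm + 2) ^ Pm * (1 + real CARD('n) * K0)"

lemma unfired_bound:
  assumes "Fs t j0 = 0"
  shows "1 + Fs t j \<le> Gb"
proof -
  have "1 + Fs t j \<le> (Dm + 2) ^ plen j j0 * (1 + Fs t j0 + real CARD('n) * K0)"
    by (rule path_ineq[OF plen_path])
  also have "\<dots> = (Dm + 2) ^ plen j j0 * (1 + real CARD('n) * K0)" using assms by simp
  also have "\<dots> \<le> (Dm + 2) ^ Pm * (1 + real CARD('n) * K0)"
    by (rule mult_right_mono, rule power_increasing[OF plen_le]) (use Dm_nonneg K0_nonneg N_ge1 in auto)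
  finally show ?thesis unfolding Gb_def .
qed

lemma fired_nonneg:
  assumes "Fs t j \<noteq> 0"
  shows "b t j \<ge> 0"
proof -
  from assms obtain s where s: "s < t" and ne: "nf s j * gamma s \<noteq> 0"
    unfolding Fs_def by (metis (no_types, lifting) lessThan_iff sum.neutral)
  then have "nf s j = 1" using nflag_01 by (metis mult_zero_left)
  then have "b (Suc s) j \<ge> 0" by (rule b_Suc_fire)
  moreover have "b t j \<ge> min (b (Suc s) j) 0" using b_persist s by simp
  ultimately show ?thesis by simp
qed

lemma zero_no_fire:
  assumes "b t j = 0" shows "nf t j = 0"
proof -
  have "d j * gamma t > 0" using d_pos[of j] gamma_bounds(3)[of t] by simp
  then show ?thesis using assms unfolding nflag_def by simp
qed

definition "Fb = Gb + 1"

lemma Fs_bound: "Fs t j \<le> Fb"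
proof (induction t arbitrary: j)
  case 0 then show ?case
    using unfired_bound[of 0 j j] by (simp add: Fs_def Fb_def)
next
  case (Suc t)
  show ?case
  proof (cases "\<exists>j0. Fs (Suc t) j0 = 0")
    case True
    then obtain j0 where "Fs (Suc t) j0 = 0" by blast
    from unfired_bound[OF this, of j] show ?thesis unfolding Fb_def by simp
  next
    case F1: False
    show ?thesis
    proof (cases "\<exists>j0. Fs t j0 = 0")
      case True
      then obtain j0 where "Fs t j0 = 0" by blast
      from unfired_bound[OF this, of j] have "Fs t j \<le> Gb - 1" by simp
      moreover have "nf t j * gamma t \<le> 2"
      proof -
        have "nf t j * gamma t \<le> 1 * gamma t"
          by (rule mult_right_mono) (use nf_le1 gamma_bounds(3)[of t] in auto)
        moreover have "gamma t < 2 / real (t+1)" by (rule gamma_bounds(2))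
        moreover have "2 / real (t+1) \<le> 2" by (simp add: divide_le_eq)
        ultimately show ?thesis by simp
      qed
      ultimately show ?thesis unfolding Fs_Suc Fb_def by simp
    next
      case False
      then have "\<forall>j0. b t j0 \<ge> 0" using fired_nonneg by blast
      then have "\<forall>j0. b t j0 = 0"
        using b_sum0[of t] sum_nonneg_eq_0_iff[of UNIV "b t"] by simp
      then have "nf t j = 0" using zero_no_fire by blast
      then show ?thesis unfolding Fs_Suc using Suc.IH[of j] by simp
    qed
  qed
qed

lemma a_bound: "a k i j \<le> 1 + Fb"
  using Fs_bound[of k j] Fb_def unfired_bound
  by (simp add: a_repr) (smt (verit) Fs_nonneg)


definition "Phi t = (\<Sum>j\<in>UNIV. Fs t j)"

lemma Phi_Suc: "Phi (Suc t) = Phi t + gamma t * (\<Sum>j\<in>UNIV. nf t j)"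
  unfolding Phi_def Fs_Suc by (simp add: sum.distrib sum_distrib_left mult.commute)

lemma Phi_step: "Phi (Suc t) \<ge> Phi t"
proof -
  have "(\<Sum>j\<in>UNIV. nf t j) \<ge> 0" by (rule sum_nonneg) (use nf_nonneg in auto)
  then show ?thesis unfolding Phi_Suc using gamma_bounds(3)[of t] by simp
qed

lemma Phi_unstable: assumes "nf t j = 1" shows "Phi (Suc t) \<ge> Phi t + gamma t"
proof -
  have "(\<Sum>j\<in>UNIV. nf t j) \<ge> nf t j" by (rule member_le_sum) (use nf_nonneg in auto)
  then have "gamma t * (\<Sum>j\<in>UNIV. nf t j) \<ge> gamma t * 1"
    using assms gamma_bounds(3)[of t] by (intro mult_left_mono) auto
  then show ?thesis unfolding Phi_Suc by simp
qed

lemma Phi_incseq: "incseq Phi"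
  using Phi_step by (simp add: incseq_SucI)

lemma Phi_bounded: "Phi t \<le> real CARD('n) * Fb"
  unfolding Phi_def using sum_bounded_above[of UNIV "Fs t" Fb] Fs_bound by simp

lemma Phi_cauchy: "\<exists>T0. \<forall>m\<ge>T0. \<forall>n\<ge>T0. \<bar>Phi m - Phi n\<bar> < 1/2"
proof -
  obtain L where "Phi \<longlonglongrightarrow> L"
    using incseq_convergent[OF Phi_incseq, of "real CARD('n) * Fb"] Phi_bounded by blast
  then have "Cauchy Phi" using LIMSEQ_imp_Cauchy by blast
  from CauchyD[OF this, of "1/2"] show ?thesis by simp
qed

lemma stretch:
  assumes uns: "\<forall>s. t \<le> s \<and> s \<le> 2*t+1 \<longrightarrow> (\<exists>j. nf s j = 1)"
  shows "m \<le> t + 2 \<Longrightarrow> Phi (t + m) \<ge> Phi t + real m / (2 * real t + 2)"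
proof (induction m)
  case 0 then show ?case by simp
next
  case (Suc m)
  then have ih: "Phi (t + m) \<ge> Phi t + real m / (2 * real t + 2)" by simp
  have "t \<le> t+m \<and> t+m \<le> 2*t+1" using Suc.prems by simp
  with uns obtain j where "nf (t+m) j = 1" by blast
  then have st: "Phi (Suc (t+m)) \<ge> Phi (t+m) + gamma (t+m)" by (rule Phi_unstable)
  have g: "gamma (t+m) \<ge> 1 / real (t+m+1)" by (rule gamma_bounds(1))
  have "1 / real (t+m+1) \<ge> 1 / (2 * real t + 2)"
    using Suc.prems by (intro divide_left_mono) auto
  then have "Phi (t + Suc m) \<ge> Phi t + real m / (2 * real t + 2) + 1 / (2 * real t + 2)"
    using ih st g by simp
  then show ?case by (simp add: add_divide_distrib)
qed

lemma stable_exists: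
  obtains T0 where "\<And>t. t \<ge> T0 \<Longrightarrow> \<exists>s. t \<le> s \<and> s \<le> 2*t+1 \<and> (\<forall>j. nf s j = 0)"
proof -
  obtain T0 where T0: "\<forall>m\<ge>T0. \<forall>n\<ge>T0. \<bar>Phi m - Phi n\<bar> < 1/2" using Phi_cauchy by blast
  have "\<exists>s. t \<le> s \<and> s \<le> 2*t+1 \<and> (\<forall>j. nf s j = 0)" if "t \<ge> T0" for t
  proof (rule ccontr)
    assume "\<not> ?thesis"
    then have uns: "\<forall>s. t \<le> s \<and> s \<le> 2*t+1 \<longrightarrow> (\<exists>j. nf s j = 1)"
      using nflag_01 by metis
    have "Phi (t + (t+2)) \<ge> Phi t + real (t+2) / (2 * real t + 2)"
      by (rule stretch[OF uns]) simp
    moreover have "real (t+2) / (2 * real t + 2) \<ge> 1/2" by (simp add: field_simps)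
    moreover have "\<bar>Phi (t + (t+2)) - Phi t\<bar> < 1/2" using T0 that by simp
    then have "Phi (t + (t+2)) - Phi t < 1/2" by (simp only: abs_less_iff)
    ultimately show False by linarith
  qed
  then show ?thesis using that by blast
qed

lemma stable_bound:
  assumes "\<forall>j. nf s j = 0"
  shows "\<bar>b s i\<bar> \<le> real CARD('n) * (Dm * gamma s)"
proof -
  have "\<And>l. - b s l \<ge> - (Dm * gamma s)"
  proof -
    fix l
    have "b s l < d l * gamma s" using assms unfolding nflag_def by (metis not_le zero_neq_one)
    moreover have "d l * gamma s \<le> Dm * gamma s"
      using d_le_Dm gamma_bounds(3)[of s] by (intro mult_right_mono) auto
    ultimately show "- b s l \<ge> - (Dm * gamma s)" by simp
  qed
  moreover have "(\<Sum>l\<in>UNIV. - b s l) = 0" using b_sum0[of s] by (simp add: sum_negf)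
  moreover have "Dm * gamma s \<ge> 0" using Dm_nonneg gamma_bounds(3)[of s] by simp
  ultimately show ?thesis using zero_sum_bound[of "\<lambda>l. - b s l" "Dm * gamma s" i] by simp
qed

definition "Cb = real CARD('n) * (real CARD('n) * (Dm * 6))"

lemma Cb_nonneg: "Cb \<ge> 0" unfolding Cb_def using Dm_nonneg by simp

lemma late_bound: obtains T1 where "\<And>t i. t \<ge> T1 \<Longrightarrow> \<bar>b t i\<bar> \<le> Cb * gamma t"
proof -
  obtain T0 where T0: "\<And>t. t \<ge> T0 \<Longrightarrow> \<exists>s. t \<le> s \<and> s \<le> 2*t+1 \<and> (\<forall>j. nf s j = 0)"
    using stable_exists by blast
  have "\<bar>b t i\<bar> \<le> Cb * gamma t" if "t \<ge> 2*T0+1" for t i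
  proof -
    define t' where "t' = (t - 1) div 2"
    have t'1: "t' \<ge> T0" using that unfolding t'_def by simp
    have t'2: "2*t'+1 \<le> t" using that unfolding t'_def by simp
    have t'3: "t \<le> 2*t'+2" using that unfolding t'_def by simp
    obtain s where s1: "t' \<le> s" and s2: "s \<le> 2*t'+1" and st: "\<forall>j. nf s j = 0" using T0[OF t'1] by blast
    have gs: "gamma s \<le> 6 * gamma t"
    proof -
      have "gamma s < 2 / real (s+1)" by (rule gamma_bounds(2))
      also have "\<dots> \<le> 2 / real (t'+1)" using s1 by (intro divide_left_mono) auto
      also have "\<dots> \<le> 6 / real (t+1)"
      proof -
        have "real (t+1) \<le> 3 * real (t'+1)" using t'3 by simp
        then show ?thesis by (simp add: field_simps)
      qed
      also have "\<dots> \<le> 6 * gamma t" using gamma_bounds(1)[of t] by (simp add: divide_le_eq)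
      finally show ?thesis by simp
    qed
    have low: "b t l \<ge> - (real CARD('n) * (Dm * (6 * gamma t)))" for l
    proof -
      have "b t l \<ge> min (b s l) 0" using b_persist[of s t l] s2 t'2 by simp
      moreover have "\<bar>b s l\<bar> \<le> real CARD('n) * (Dm * gamma s)" by (rule stable_bound[OF st])
      moreover have "real CARD('n) * (Dm * gamma s) \<le> real CARD('n) * (Dm * (6 * gamma t))"
        using gs Dm_nonneg by (intro mult_left_mono) auto
      ultimately show ?thesis by linarith
    qed
    have c0: "real CARD('n) * (Dm * (6 * gamma t)) \<ge> 0" using Dm_nonneg gamma_bounds(3)[of t] by simp
    have "\<bar>b t i\<bar> \<le> real CARD('n) * (real CARD('n) * (Dm * (6 * gamma t)))"
      by (rule zero_sum_bound[OF b_sum0 low c0])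
    then show ?thesis unfolding Cb_def by (simp add: mult.assoc)
  qed
  then show ?thesis using that by blast
qed

lemma inv_sq_summable: "summable (\<lambda>n::nat. 1 / (real n + 1)^2)"
proof -
  have "summable (\<lambda>n::nat. 1 / real ((n + 1)^2))" using inverse_squares_sums sums_summable by blast
  moreover have "(\<lambda>n::nat. 1 / real ((n + 1)^2)) = (\<lambda>n::nat. 1 / (real n + 1)^2)" by (simp add: fun_eq_iff)
  ultimately show ?thesis by simp
qed

lemma ab_summable: "summable (\<lambda>t. alpha t * \<bar>b t i\<bar>)"
proof -
  obtain T1 where T1: "\<And>t i. t \<ge> T1 \<Longrightarrow> \<bar>b t i\<bar> \<le> Cb * gamma t" using late_bound by blast
  have sg: "summable (\<lambda>t. Cb * ((alpha t)^2 + 4 * (1 / (real t + 1)^2)))"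
    by (intro summable_mult summable_add alpha_sq inv_sq_summable)
  show ?thesis
  proof (rule summable_comparison_test'[OF sg])
    fix t assume "t \<ge> T1"
    then have bb: "\<bar>b t i\<bar> \<le> Cb * gamma t" by (rule T1)
    have ap: "alpha t > 0" using alpha_pos by simp
    have gp: "gamma t > 0" by (rule gamma_bounds(3))
    have "norm (alpha t * \<bar>b t i\<bar>) = alpha t * \<bar>b t i\<bar>" using ap by simp
    also have "\<dots> \<le> alpha t * (Cb * gamma t)" using bb ap by (intro mult_left_mono) auto
    also have "\<dots> = Cb * (alpha t * gamma t)" by simp
    also have "\<dots> \<le> Cb * ((alpha t)^2 + (gamma t)^2)"
    proof -
      have "0 \<le> (alpha t - gamma t)^2" by simp
      then have "2 * (alpha t * gamma t) \<le> (alpha t)^2 + (gamma t)^2"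
        by (simp add: power2_diff algebra_simps)
      moreover have "alpha t * gamma t > 0" using ap gp by simp
      ultimately have "alpha t * gamma t \<le> (alpha t)^2 + (gamma t)^2" by linarith
      then show ?thesis using Cb_nonneg by (intro mult_left_mono) auto
    qed
    also have "\<dots> \<le> Cb * ((alpha t)^2 + 4 * (1 / (real t + 1)^2))"
    proof -
      have "gamma t < 2 / real (t+1)" by (rule gamma_bounds(2))
      then have "(gamma t)^2 \<le> (2 / real (t+1))^2" using gp by (intro power_mono) auto
      also have "\<dots> = 4 * (1 / (real t + 1)^2)" by (simp add: power_divide)
      finally show ?thesis using Cb_nonneg by (intro mult_left_mono) auto
    qed
    finally show "norm (alpha t * \<bar>b t i\<bar>) \<le> Cb * ((alpha t)^2 + 4 * (1 / (real t + 1)^2))" .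
  qed
qed


lemma y_step_matrix:
  "y (Suc k) i = y k i + alpha k * ((\<Sum>j\<in>UNIV. a k i j * (x k j - x k i)) + b k i * x k i)"
proof -
  have "(\<Sum>j\<in>in_nbrs E i. a k i j * (x k j - x k i)) = (\<Sum>j\<in>UNIV. a k i j * (x k j - x k i))"
    using row_sum[where i=i and f="\<lambda>j. x k j - x k i" and k=k] by (simp add: mult.commute)
  then show ?thesis using y_step by (simp add: algebra_simps)
qed

lemma clip_ge: "v \<ge> qmax \<Longrightarrow> clip qmin qmax v = qmax"
  using q_lt unfolding clip_def by simp
lemma clip_le: "v \<le> qmin \<Longrightarrow> clip qmin qmax v = qmin"
  using q_lt unfolding clip_def by simp

lemma x_hi: "y k i \<ge> qmax \<Longrightarrow> x k i = qmax"
proof -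
  assume h: "y k i \<ge> qmax"
  have "prob_hi qmin qmax (y k i) = 1" unfolding prob_hi_def clip_ge[OF h] using q_lt by simp
  then show ?thesis using x_vals x_lo_supp by (metis less_irrefl)
qed

lemma x_lo: "y k i \<le> qmin \<Longrightarrow> x k i = qmin"
proof -
  assume h: "y k i \<le> qmin"
  have "prob_hi qmin qmax (y k i) = 0" unfolding prob_hi_def clip_le[OF h] by simp
  then show ?thesis using x_vals x_hi_supp by (metis less_irrefl)
qed

definition "Q = \<bar>qmin\<bar> + \<bar>qmax\<bar>"
definition "Am = 1 + Fb"
definition "J = alpha 0 * (real CARD('n) * (Am * (qmax - qmin)) + real CARD('n) * K0 * Q)"

lemma x_range: "qmin \<le> x k i" "x k i \<le> qmax"
  using x_vals[rule_format, of k i] q_lt by auto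

lemma x_abs: "\<bar>x k i\<bar> \<le> Q"
  using x_vals[rule_format, of k i] unfolding Q_def by auto

lemma alpha_le0: "alpha k \<le> alpha 0"
  using lift_Suc_antimono_le[of alpha 0 k] alpha_noninc by simp

lemma cons_sum_bounds:
  "(\<Sum>j\<in>UNIV. a k i j * (x k j - x k i)) \<le> real CARD('n) * (Am * (qmax - qmin))"
  "(\<Sum>j\<in>UNIV. a k i j * (x k j - x k i)) \<ge> - (real CARD('n) * (Am * (qmax - qmin)))"
proof -
  have t: "\<bar>a k i j * (x k j - x k i)\<bar> \<le> Am * (qmax - qmin)" for j
  proof -
    have "\<bar>x k j - x k i\<bar> \<le> qmax - qmin" using x_range[of k j] x_range[of k i] by linarith
    moreover have "\<bar>a k i j\<bar> \<le> Am" using a_bound a_nonneg unfolding Am_def by simp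
    ultimately show ?thesis unfolding abs_mult by (intro mult_mono) auto
  qed
  show "(\<Sum>j\<in>UNIV. a k i j * (x k j - x k i)) \<le> real CARD('n) * (Am * (qmax - qmin))"
    using sum_bounded_above[of UNIV "\<lambda>j. a k i j * (x k j - x k i)" "Am * (qmax - qmin)"] t
    by (simp add: abs_le_iff)
  have lb: "- (Am * (qmax - qmin)) \<le> a k i j * (x k j - x k i)" for j
    using t[of j] by (simp add: abs_le_iff)
  show "(\<Sum>j\<in>UNIV. a k i j * (x k j - x k i)) \<ge> - (real CARD('n) * (Am * (qmax - qmin)))"
    using sum_bounded_below[of UNIV "- (Am * (qmax - qmin))" "\<lambda>j. a k i j * (x k j - x k i)", OF lb]
    by simp
qed

lemma jump_bound: "\<bar>alpha k * ((\<Sum>j\<in>UNIV. a k i j * (x k j - x k i)) + b k i * x k i)\<bar> \<le> J"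
proof -
  have "\<bar>b k i * x k i\<bar> \<le> real CARD('n) * K0 * Q"
    unfolding abs_mult using b_abs[of k i] x_abs[of k i] by (intro mult_mono) (auto simp: Q_def)
  then have "\<bar>(\<Sum>j\<in>UNIV. a k i j * (x k j - x k i)) + b k i * x k i\<bar>
      \<le> real CARD('n) * (Am * (qmax - qmin)) + real CARD('n) * K0 * Q"
    using cons_sum_bounds[of k i] by (simp add: abs_le_iff)
  moreover have "\<bar>alpha k\<bar> \<le> alpha 0" using alpha_le0 alpha_pos by (simp add: less_imp_le)
  ultimately show ?thesis unfolding abs_mult J_def by (intro mult_mono) auto
qed

lemma J_nonneg: "J \<ge> 0" using jump_bound[of 0 undefined] by simp

definition "ps i k = (\<Sum>t<k. alpha t * \<bar>b t i\<bar>)"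

lemma ps_nonneg: "ps i k \<ge> 0"
  unfolding ps_def by (intro sum_nonneg mult_nonneg_nonneg) (auto simp: less_imp_le alpha_pos)

lemma Q_nonneg: "Q \<ge> 0" unfolding Q_def by simp

lemma y_upper: "y k i \<le> max (y 0 i) (qmax + J) + Q * ps i k"
proof (induction k)
  case 0 then show ?case by (simp add: ps_def)
next
  case (Suc k)
  have psS: "ps i (Suc k) = ps i k + alpha k * \<bar>b k i\<bar>" unfolding ps_def by simp
  have Qp: "Q * ps i k \<ge> 0" using Q_nonneg ps_nonneg by simp
  have Qa: "Q * (alpha k * \<bar>b k i\<bar>) \<ge> 0" using Q_nonneg alpha_pos by (simp add: less_imp_le)
  show ?case
  proof (cases "y k i \<ge> qmax")
    case True
    then have xi: "x k i = qmax" by (rule x_hi)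
    have "(\<Sum>j\<in>UNIV. a k i j * (x k j - x k i)) \<le> 0"
      unfolding xi by (rule sum_nonpos) (use a_nonneg x_range in \<open>auto intro: mult_nonneg_nonpos\<close>)
    moreover have "b k i * x k i \<le> \<bar>b k i\<bar> * Q"
    proof -
      have "\<bar>b k i * x k i\<bar> \<le> \<bar>b k i\<bar> * Q" unfolding abs_mult using x_abs[of k i] by (intro mult_left_mono) auto
      then show ?thesis by (simp add: abs_le_iff)
    qed
    ultimately have "(\<Sum>j\<in>UNIV. a k i j * (x k j - x k i)) + b k i * x k i \<le> \<bar>b k i\<bar> * Q" by simp
    then have "alpha k * ((\<Sum>j\<in>UNIV. a k i j * (x k j - x k i)) + b k i * x k i) \<le> alpha k * (\<bar>b k i\<bar> * Q)"
      using alpha_pos by (intro mult_left_mono) (auto simp: less_imp_le)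
    moreover have "Q * ps i (Suc k) = Q * ps i k + alpha k * (\<bar>b k i\<bar> * Q)" unfolding psS by (simp add: algebra_simps)
    ultimately show ?thesis unfolding y_step_matrix using Suc.IH by linarith
  next
    case False
    have "y (Suc k) i \<le> y k i + J" unfolding y_step_matrix using jump_bound[of k i] by (simp add: abs_le_iff)
    moreover have "Q * ps i (Suc k) = Q * ps i k + Q * (alpha k * \<bar>b k i\<bar>)" unfolding psS by (simp add: algebra_simps)
    ultimately show ?thesis using False Qp Qa J_nonneg by linarith
  qed
qed

lemma y_lower: "y k i \<ge> min (y 0 i) (qmin - J) - Q * ps i k"
proof (induction k)
  case 0 then show ?case by (simp add: ps_def)
next
  case (Suc k)
  have psS: "ps i (Suc k) = ps i k + alpha k * \<bar>b k i\<bar>" unfolding ps_def by simp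
  have Qp: "Q * ps i k \<ge> 0" using Q_nonneg ps_nonneg by simp
  have Qa: "Q * (alpha k * \<bar>b k i\<bar>) \<ge> 0" using Q_nonneg alpha_pos by (simp add: less_imp_le)
  show ?case
  proof (cases "y k i \<le> qmin")
    case True
    then have xi: "x k i = qmin" by (rule x_lo)
    have "(\<Sum>j\<in>UNIV. a k i j * (x k j - x k i)) \<ge> 0"
      unfolding xi by (rule sum_nonneg) (use a_nonneg x_range in \<open>auto intro: mult_nonneg_nonneg\<close>)
    moreover have "b k i * x k i \<ge> - (\<bar>b k i\<bar> * Q)"
    proof -
      have "\<bar>b k i * x k i\<bar> \<le> \<bar>b k i\<bar> * Q" unfolding abs_mult using x_abs[of k i] by (intro mult_left_mono) auto
      then show ?thesis by (simp add: abs_le_iff)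
    qed
    ultimately have "(\<Sum>j\<in>UNIV. a k i j * (x k j - x k i)) + b k i * x k i \<ge> - (\<bar>b k i\<bar> * Q)" by simp
    then have "alpha k * ((\<Sum>j\<in>UNIV. a k i j * (x k j - x k i)) + b k i * x k i) \<ge> alpha k * (- (\<bar>b k i\<bar> * Q))"
      using alpha_pos by (intro mult_left_mono) (auto simp: less_imp_le)
    moreover have "Q * ps i (Suc k) = Q * ps i k + alpha k * (\<bar>b k i\<bar> * Q)" unfolding psS by (simp add: algebra_simps)
    ultimately show ?thesis unfolding y_step_matrix using Suc.IH by linarith
  next
    case False
    have "y (Suc k) i \<ge> y k i - J" unfolding y_step_matrix using jump_bound[of k i] by (simp add: abs_le_iff)
    moreover have "Q * ps i (Suc k) = Q * ps i k + Q * (alpha k * \<bar>b k i\<bar>)" unfolding psS by (simp add: algebra_simps)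
    ultimately show ?thesis using False Qp Qa J_nonneg by linarith
  qed
qed

definition "SB = (\<Sum>i\<in>UNIV. suminf (\<lambda>t. alpha t * \<bar>b t i\<bar>))"
definition "My = (\<Sum>i\<in>UNIV. \<bar>y 0 i\<bar>) + \<bar>qmin\<bar> + \<bar>qmax\<bar> + J + Q * SB"

lemma ab_nn: "alpha t * \<bar>b t i\<bar> \<ge> 0"
  using alpha_pos by (simp add: less_imp_le)

lemma suminf_ab_nn: "suminf (\<lambda>t. alpha t * \<bar>b t l\<bar>) \<ge> 0"
  by (rule suminf_nonneg[OF ab_summable ab_nn])

lemma ps_le_SB: "ps i k \<le> SB"
proof -
  have "ps i k \<le> suminf (\<lambda>t. alpha t * \<bar>b t i\<bar>)"
    unfolding ps_def by (rule sum_le_suminf[OF ab_summable]) (simp_all add: ab_nn)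
  also have "\<dots> \<le> SB" unfolding SB_def
    by (rule member_le_sum) (simp_all add: suminf_ab_nn)
  finally show ?thesis .
qed

lemma y_bound: "\<bar>y k i\<bar> \<le> My"
proof -
  have y0: "\<bar>y 0 i\<bar> \<le> (\<Sum>i\<in>UNIV. \<bar>y 0 i\<bar>)" by (rule member_le_sum) auto
  have "Q * ps i k \<le> Q * SB" using ps_le_SB Q_nonneg by (intro mult_left_mono) auto
  moreover have "max (y 0 i) (qmax + J) \<le> \<bar>y 0 i\<bar> + \<bar>qmax\<bar> + J"
    using J_nonneg abs_ge_self[of "y 0 i"] abs_ge_self[of qmax] abs_ge_zero[of "y 0 i"] abs_ge_zero[of qmax]
    by (intro max.boundedI; linarith)
  moreover have "min (y 0 i) (qmin - J) \<ge> - \<bar>y 0 i\<bar> - \<bar>qmin\<bar> - J"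
    using J_nonneg abs_ge_minus_self[of "y 0 i"] abs_ge_minus_self[of qmin] abs_ge_zero[of "y 0 i"] abs_ge_zero[of qmin]
    by (intro min.boundedI; linarith)
  moreover have "Q * ps i k \<ge> 0" using Q_nonneg ps_nonneg by simp
  moreover note y_upper[where k=k and i=i] y_lower[where k=k and i=i] y0 J_nonneg
  ultimately show ?thesis unfolding My_def abs_le_iff by linarith
qed

lemma y_conserve: "(\<Sum>i\<in>UNIV. y k i) = (\<Sum>i\<in>UNIV. y 0 i)"
proof (induction k)
  case 0 then show ?case by simp
next
  case (Suc k)
  have pt: "(\<Sum>j\<in>UNIV. a k i j * (x k j - x k i)) + b k i * x k i
      = (\<Sum>j\<in>UNIV. a k i j * x k j) - (\<Sum>l\<in>UNIV. a k l i * x k i)" for i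
    unfolding b_matrix by (simp add: sum_subtractf sum_distrib_right sum_distrib_left algebra_simps)
  have "(\<Sum>i\<in>UNIV. (\<Sum>j\<in>UNIV. a k i j * x k j) - (\<Sum>l\<in>UNIV. a k l i * x k i)) = 0"
    unfolding sum_subtractf using sum.swap[of "\<lambda>i j. a k i j * x k j" UNIV UNIV] by simp
  then have "(\<Sum>i\<in>UNIV. alpha k * ((\<Sum>j\<in>UNIV. a k i j * (x k j - x k i)) + b k i * x k i)) = 0"
    unfolding pt by (simp add: sum_distrib_left[symmetric])
  then show ?case unfolding y_step_matrix sum.distrib using Suc.IH by simp
qed

end


lemma clip_mono: "qmin \<le> qmax \<Longrightarrow> u \<le> v \<Longrightarrow> clip qmin qmax u \<le> clip qmin qmax v"
  unfolding clip_def by simp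

lemma clip_id: "qmin \<le> m \<Longrightarrow> m \<le> qmax \<Longrightarrow> clip qmin qmax m = m"
  unfolding clip_def by simp

lemma clip_range: "qmin \<le> qmax \<Longrightarrow> qmin \<le> clip qmin qmax v \<and> clip qmin qmax v \<le> qmax"
  unfolding clip_def by simp

lemma clip_prod: "qmin \<le> qmax \<Longrightarrow>
   (v - clip qmin qmax v) * (clip qmin qmax v - clip qmin qmax w) \<ge> 0"
  unfolding clip_def by (auto simp: min_def max_def mult_nonneg_nonneg mult_nonpos_nonpos)

lemma V_bound:
  fixes yv :: "'n::finite \<Rightarrow> real"
  assumes q: "qmin < qmax" and m1: "qmin \<le> m" and m2: "m \<le> qmax"
    and sm: "(\<Sum>i\<in>UNIV. yv i) = real CARD('n) * m"
    and yb: "\<forall>i. \<bar>yv i\<bar> \<le> M"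
    and dz: "\<forall>p q. \<bar>clip qmin qmax (yv p) - clip qmin qmax (yv q)\<bar> \<le> D"
    and D0: "D \<ge> 0"
  shows "\<bar>yv i - m\<bar> \<le> max ((M + \<bar>m\<bar>) * 2 / (qmax - qmin)) (real CARD('n)) * D"
proof -
  define K where "K = max ((M + \<bar>m\<bar>) * 2 / (qmax - qmin)) (real CARD('n))"
  define rho where "rho = (qmax - qmin) / 2"
  have rho0: "rho > 0" using q unfolding rho_def by simp
  have M0: "M + \<bar>m\<bar> \<ge> 0" using yb[rule_format, of i] by linarith
  have KD0: "K * D \<ge> real CARD('n) * D" unfolding K_def using D0 by (intro mult_right_mono) auto
  have s0: "(\<Sum>l\<in>UNIV. yv l - m) = 0" using sm by (simp add: sum_subtractf)
  have "\<bar>yv i - m\<bar> \<le> K * D"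
  proof (cases "D \<ge> rho")
    case True
    have "\<bar>yv i - m\<bar> \<le> M + \<bar>m\<bar>" using yb[rule_format, of i] by linarith
    also have "\<dots> = ((M + \<bar>m\<bar>) * 2 / (qmax - qmin)) * rho" unfolding rho_def using q by simp
    also have "\<dots> \<le> ((M + \<bar>m\<bar>) * 2 / (qmax - qmin)) * D"
      using True M0 q by (intro mult_left_mono) auto
    also have "\<dots> \<le> K * D" unfolding K_def using D0 by (intro mult_right_mono) auto
    finally show ?thesis .
  next
    case False
    obtain p where p: "yv p \<ge> m"
    proof (rule ccontr)
      assume "\<not> thesis"
      then have "\<forall>l. yv l < m" using that by (meson not_le)
      then have "(\<Sum>l\<in>UNIV. yv l) < (\<Sum>l\<in>(UNIV::'n set). m)" by (intro sum_strict_mono) auto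
      then show False using sm by simp
    qed
    obtain r where r: "yv r \<le> m"
    proof (rule ccontr)
      assume "\<not> thesis"
      then have "\<forall>l. yv l > m" using that by (meson not_le)
      then have "(\<Sum>l\<in>(UNIV::'n set). m) < (\<Sum>l\<in>UNIV. yv l)" by (intro sum_strict_mono) auto
      then show False using sm by simp
    qed
    have zp: "clip qmin qmax (yv p) \<ge> m"
      using clip_mono[of qmin qmax m "yv p"] clip_id[OF m1 m2] p q by simp
    have zr: "clip qmin qmax (yv r) \<le> m"
      using clip_mono[of qmin qmax "yv r" m] clip_id[OF m1 m2] r q by simp
    have "m - qmin \<ge> rho \<or> qmax - m \<ge> rho" unfolding rho_def by (cases "m - qmin \<ge> (qmax - qmin) / 2") auto
    then show ?thesis
    proof
      assume room: "m - qmin \<ge> rho"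
      have low: "yv l - m \<ge> - D" for l
      proof -
        have "clip qmin qmax (yv l) \<ge> m - D" using dz[rule_format, of p l] zp by linarith
        then have c: "clip qmin qmax (yv l) > qmin" using False room by linarith
        then have "yv l \<ge> qmin" unfolding clip_def using q by (auto simp: min_def max_def split: if_splits)
        then have "clip qmin qmax (yv l) \<le> yv l" unfolding clip_def by simp
        then show ?thesis using \<open>clip qmin qmax (yv l) \<ge> m - D\<close> by linarith
      qed
      have "\<bar>yv i - m\<bar> \<le> real CARD('n) * D" by (rule zero_sum_bound[OF s0 low D0])
      then show ?thesis using KD0 by linarith
    next
      assume room: "qmax - m \<ge> rho"
      have low: "m - yv l \<ge> - D" for l
      proof -
        have "clip qmin qmax (yv l) \<le> m + D" using dz[rule_format, of l r] zr by linarith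
        then have c: "clip qmin qmax (yv l) < qmax" using False room by linarith
        then have "yv l \<le> qmax" unfolding clip_def using q by (auto simp: min_def max_def split: if_splits)
        then have "clip qmin qmax (yv l) \<ge> yv l" unfolding clip_def by simp
        then show ?thesis using \<open>clip qmin qmax (yv l) \<le> m + D\<close> by linarith
      qed
      have s1: "(\<Sum>l\<in>UNIV. m - yv l) = 0" using s0 by (simp add: sum_subtractf)
      have "\<bar>m - yv i\<bar> \<le> real CARD('n) * D" by (rule zero_sum_bound[OF s1 low D0])
      then show ?thesis using KD0 by (simp add: abs_minus_commute)
    qed
  qed
  then show ?thesis unfolding K_def .
qed


context alg begin

lemma b_weighted: "(\<Sum>i\<in>UNIV. b k i * g i) = (\<Sum>i\<in>UNIV. \<Sum>j\<in>UNIV. a k i j * g i) - (\<Sum>i\<in>UNIV. \<Sum>j\<in>UNIV. a k i j * g j)"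
proof -
  have "(\<Sum>i\<in>UNIV. b k i * g i) = (\<Sum>i\<in>UNIV. \<Sum>j\<in>UNIV. a k i j * g i) - (\<Sum>i\<in>UNIV. \<Sum>l\<in>UNIV. a k l i * g i)"
    unfolding b_matrix by (simp add: left_diff_distrib sum_subtractf sum_distrib_right)
  also have "(\<Sum>i\<in>UNIV. \<Sum>l\<in>UNIV. a k l i * g i) = (\<Sum>l\<in>UNIV. \<Sum>i\<in>UNIV. a k l i * g i)"
    by (rule sum.swap)
  finally show ?thesis .
qed

lemma LHS_expand:
  fixes z :: "'n \<Rightarrow> real"
  shows "(\<Sum>i\<in>UNIV. \<Sum>j\<in>UNIV. y k i * Lplus E (a k) i j * z j)
    = (\<Sum>i\<in>UNIV. \<Sum>j\<in>UNIV. a k i j * (y k j * z j - y k i * z j))"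
proof -
  have inner: "(\<Sum>j\<in>UNIV. y k i * Lplus E (a k) i j * z j)
      = y k i * S_out E (a k) i * z i - (\<Sum>j\<in>UNIV. a k i j * (y k i * z j))" for i
  proof -
    have "(\<Sum>j\<in>UNIV. y k i * Lplus E (a k) i j * z j)
        = (\<Sum>j\<in>UNIV. (if i = j then y k i * S_out E (a k) i * z j else 0) - a k i j * (y k i * z j))"
      unfolding Lplus_def by (rule sum.cong) (auto simp: algebra_simps)
    also have "\<dots> = y k i * S_out E (a k) i * z i - (\<Sum>j\<in>UNIV. a k i j * (y k i * z j))"
      by (simp add: sum_subtractf)
    finally show ?thesis .
  qed
  have col: "(\<Sum>i\<in>UNIV. y k i * S_out E (a k) i * z i) = (\<Sum>i\<in>UNIV. \<Sum>j\<in>UNIV. a k i j * (y k j * z j))"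
  proof -
    have "(\<Sum>i\<in>UNIV. y k i * S_out E (a k) i * z i) = (\<Sum>j\<in>UNIV. \<Sum>i\<in>UNIV. a k i j * (y k j * z j))"
      unfolding S_out_col by (simp add: sum_distrib_left sum_distrib_right algebra_simps)
    also have "\<dots> = (\<Sum>i\<in>UNIV. \<Sum>j\<in>UNIV. a k i j * (y k j * z j))" by (rule sum.swap)
    finally show ?thesis .
  qed
  show ?thesis unfolding inner sum_subtractf col
    by (simp add: sum_subtractf right_diff_distrib)
qed

definition "zz k i = clip qmin qmax (y k i)"
definition "W k = (\<Sum>i\<in>UNIV. \<Sum>j\<in>UNIV. a k i j * (zz k i - zz k j)^2)"

lemma zz_abs: "\<bar>zz k i\<bar> \<le> Q"
  using clip_range[of qmin qmax "y k i"] q_lt unfolding zz_def Q_def by auto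

lemma key_ineq:
  "(\<Sum>i\<in>UNIV. \<Sum>j\<in>UNIV. y k i * Lplus E (a k) i j * zz k j)
     \<ge> W k / 2 + (\<Sum>i\<in>UNIV. b k i * ((zz k i)^2 / 2 - y k i * zz k i))"
proof -
  define g where "g i = (zz k i)^2 / 2 - y k i * zz k i" for i
  define T where "T = (\<Sum>i\<in>UNIV. \<Sum>j\<in>UNIV. a k i j * ((y k i - zz k i) * (zz k i - zz k j)))"
  have T0: "T \<ge> 0" unfolding T_def zz_def
    using q_lt by (intro sum_nonneg mult_nonneg_nonneg a_nonneg clip_prod) auto
  have "(\<Sum>i\<in>UNIV. \<Sum>j\<in>UNIV. a k i j * (y k j * zz k j - y k i * zz k j))
      = (\<Sum>i\<in>UNIV. \<Sum>j\<in>UNIV. a k i j * (zz k i - zz k j)^2 / 2 + a k i j * g i - a k i j * g j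
           + a k i j * ((y k i - zz k i) * (zz k i - zz k j)))"
    unfolding g_def by (intro sum.cong refl) (simp add: field_simps power2_eq_square)
  also have "\<dots> = W k / 2 + ((\<Sum>i\<in>UNIV. \<Sum>j\<in>UNIV. a k i j * g i) - (\<Sum>i\<in>UNIV. \<Sum>j\<in>UNIV. a k i j * g j)) + T"
    unfolding W_def T_def by (simp add: sum.distrib sum_subtractf sum_divide_distrib)
  finally have "(\<Sum>i\<in>UNIV. \<Sum>j\<in>UNIV. y k i * Lplus E (a k) i j * zz k j)
      = W k / 2 + (\<Sum>i\<in>UNIV. b k i * g i) + T"
    unfolding LHS_expand b_weighted .
  then show ?thesis using T0 unfolding g_def by simp
qed


lemma W_nonneg: "W k \<ge> 0"
  unfolding W_def by (intro sum_nonneg mult_nonneg_nonneg a_nonneg) auto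

lemma edge_W: assumes "(u, v) \<in> E" shows "\<bar>zz k v - zz k u\<bar> \<le> sqrt (W k)"
proof -
  have u: "u \<in> in_nbrs E v" using assms unfolding in_nbrs_def by simp
  have a1: "a k v u \<ge> 1" using u Fs_nonneg[of k u] by (simp add: a_repr)
  have "(zz k v - zz k u)^2 \<le> a k v u * (zz k v - zz k u)^2"
    using a1 by (simp add: mult_right_mono[of 1 "a k v u", simplified])
  also have "\<dots> \<le> (\<Sum>j\<in>UNIV. a k v j * (zz k v - zz k j)^2)"
    by (rule member_le_sum[where f="\<lambda>j. a k v j * (zz k v - zz k j)^2"]) (auto intro: mult_nonneg_nonneg a_nonneg)
  also have "\<dots> \<le> W k" unfolding W_def
    by (rule member_le_sum[where f="\<lambda>i. \<Sum>j\<in>UNIV. a k i j * (zz k i - zz k j)^2"])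
       (auto intro!: sum_nonneg mult_nonneg_nonneg a_nonneg)
  finally have "sqrt ((zz k v - zz k u)^2) \<le> sqrt (W k)" by (rule real_sqrt_le_mono)
  then show ?thesis by simp
qed

lemma path_W: "(p, q) \<in> E ^^ n \<Longrightarrow> \<bar>zz k p - zz k q\<bar> \<le> real n * sqrt (W k)"
proof (induction n arbitrary: q)
  case 0 then show ?case by simp
next
  case (Suc n)
  from Suc.prems obtain m' where h1: "(p, m') \<in> E ^^ n" and h2: "(m', q) \<in> E"
    by (rule relpow_Suc_E)
  have "\<bar>zz k p - zz k m'\<bar> \<le> real n * sqrt (W k)" by (rule Suc.IH[OF h1])
  moreover have "\<bar>zz k q - zz k m'\<bar> \<le> sqrt (W k)" by (rule edge_W[OF h2])
  ultimately show ?case by (simp add: abs_le_iff algebra_simps) 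
qed

lemma all_W: "\<bar>zz k p - zz k q\<bar> \<le> (real Pm + 1) * sqrt (W k)"
proof -
  have "\<bar>zz k p - zz k q\<bar> \<le> real (plen p q) * sqrt (W k)" by (rule path_W[OF plen_path])
  also have "\<dots> \<le> (real Pm + 1) * sqrt (W k)"
    using plen_le[of p q] W_nonneg[of k] by (intro mult_right_mono) auto
  finally show ?thesis .
qed

lemma main:
  "\<exists>c1 c2. c1 > 0 \<and> c2 > 0 \<and> (\<forall>k.
     (\<Sum>i\<in>UNIV. \<Sum>j\<in>UNIV. y k i * Lplus E (a k) i j * clip qmin qmax (y k j))
       \<ge> c1 * (\<Sum>i\<in>UNIV. (y k i - (\<Sum>l\<in>UNIV. y 0 l) / real (card (UNIV :: 'n set)))\<^sup>2)
         - c2 * (\<Sum>i\<in>UNIV. \<bar>imbal E (a k) i\<bar>))"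
proof -
  define m where "m = (\<Sum>l\<in>UNIV. y 0 l) / real (card (UNIV :: 'n set))"
  define Kv where "Kv = max ((My + \<bar>m\<bar>) * 2 / (qmax - qmin)) (real CARD('n))"
  define c1 where "c1 = 1 / (2 * real CARD('n) * Kv^2 * (real Pm + 1)^2)"
  define cg where "cg = Q^2 / 2 + My * Q"
  define c2 where "c2 = cg + 1"
  have "Kv \<ge> real CARD('n)" unfolding Kv_def by (rule max.cobounded2)
  then have Kv1: "Kv \<ge> 1" using N_ge1 by linarith
  have c1p: "c1 > 0" unfolding c1_def using Kv1 N_ge1 by simp
  have My0: "My \<ge> 0" using y_bound[of 0 undefined] by simp
  have cg0: "cg \<ge> 0" unfolding cg_def using My0 Q_nonneg by simp
  have c2p: "c2 > 0" unfolding c2_def using cg0 by simp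
  have "(\<Sum>i\<in>UNIV. \<Sum>j\<in>UNIV. y k i * Lplus E (a k) i j * clip qmin qmax (y k j))
       \<ge> c1 * (\<Sum>i\<in>UNIV. (y k i - m)\<^sup>2) - c2 * (\<Sum>i\<in>UNIV. \<bar>b k i\<bar>)" for k
  proof -
    define D where "D = (real Pm + 1) * sqrt (W k)"
    have D0: "D \<ge> 0" unfolding D_def using W_nonneg by simp
    have sm: "(\<Sum>i\<in>UNIV. y k i) = real CARD('n) * m"
      using y_conserve[of k] N_ge1 unfolding m_def by simp
    have dz: "\<forall>p q. \<bar>clip qmin qmax (y k p) - clip qmin qmax (y k q)\<bar> \<le> D"
      using all_W unfolding zz_def D_def by blast
    have yb: "\<forall>i. \<bar>y k i\<bar> \<le> My" using y_bound by blast
    have each: "\<bar>y k i - m\<bar> \<le> Kv * D" for i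
      unfolding Kv_def
      by (rule V_bound[OF q_lt _ _ sm yb dz D0]) (use avg1 avg2 m_def in auto)
    have "(\<Sum>i\<in>UNIV. (y k i - m)\<^sup>2) \<le> real CARD('n) * (Kv * D)^2"
    proof -
      have "(y k i - m)^2 \<le> (Kv * D)^2" for i
      proof -
        have "\<bar>y k i - m\<bar>^2 \<le> (Kv * D)^2" using each[of i] by (intro power_mono) auto
        then show ?thesis by simp
      qed
      then show ?thesis using sum_bounded_above[of UNIV "\<lambda>i. (y k i - m)^2" "(Kv * D)^2"] by simp
    qed
    also have "\<dots> = (2 * real CARD('n) * Kv^2 * (real Pm + 1)^2) * (W k / 2)"
      unfolding D_def using W_nonneg[of k] by (simp add: power_mult_distrib)
    finally have "c1 * (\<Sum>i\<in>UNIV. (y k i - m)\<^sup>2) \<le> c1 * ((2 * real CARD('n) * Kv^2 * (real Pm + 1)^2) * (W k / 2))"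
      using c1p by (intro mult_left_mono) auto
    also have "\<dots> = W k / 2" unfolding c1_def using Kv1 N_ge1 by simp
    finally have V1: "c1 * (\<Sum>i\<in>UNIV. (y k i - m)\<^sup>2) \<le> W k / 2" .
    have gb: "b k i * ((zz k i)^2 / 2 - y k i * zz k i) \<ge> - (cg * \<bar>b k i\<bar>)" for i
    proof -
      have "\<bar>(zz k i)^2 / 2 - y k i * zz k i\<bar> \<le> \<bar>zz k i\<bar>^2 / 2 + \<bar>y k i\<bar> * \<bar>zz k i\<bar>"
      proof -
        have "\<bar>(zz k i)^2 / 2 - y k i * zz k i\<bar> \<le> \<bar>(zz k i)^2 / 2\<bar> + \<bar>y k i * zz k i\<bar>"
          by (rule abs_triangle_ineq4)
        also have "\<bar>(zz k i)^2 / 2\<bar> = \<bar>zz k i\<bar>^2 / 2" by simp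
        also have "\<bar>y k i * zz k i\<bar> = \<bar>y k i\<bar> * \<bar>zz k i\<bar>" by (rule abs_mult)
        finally show ?thesis .
      qed
      also have "\<dots> \<le> Q^2 / 2 + My * Q"
      proof -
        have "\<bar>zz k i\<bar>^2 \<le> Q^2" using zz_abs[of k i] by (intro power_mono) auto
        moreover have "\<bar>y k i\<bar> * \<bar>zz k i\<bar> \<le> My * Q" using y_bound[of k i] zz_abs[of k i] by (intro mult_mono) auto
        ultimately show ?thesis by simp
      qed
      finally have "\<bar>b k i * ((zz k i)^2 / 2 - y k i * zz k i)\<bar> \<le> \<bar>b k i\<bar> * cg"
        unfolding abs_mult cg_def by (intro mult_left_mono) auto
      then show ?thesis by (simp add: abs_le_iff mult.commute)
    qed
    have "(\<Sum>i\<in>UNIV. b k i * ((zz k i)^2 / 2 - y k i * zz k i)) \<ge> (\<Sum>i\<in>UNIV. - (cg * \<bar>b k i\<bar>))"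
      by (rule sum_mono) (rule gb)
    also have "(\<Sum>i\<in>UNIV. - (cg * \<bar>b k i\<bar>)) = - (cg * (\<Sum>i\<in>UNIV. \<bar>b k i\<bar>))"
      by (simp add: sum_negf sum_distrib_left)
    finally have B1: "(\<Sum>i\<in>UNIV. b k i * ((zz k i)^2 / 2 - y k i * zz k i)) \<ge> - (cg * (\<Sum>i\<in>UNIV. \<bar>b k i\<bar>))" .
    have B2: "cg * (\<Sum>i\<in>UNIV. \<bar>b k i\<bar>) \<le> c2 * (\<Sum>i\<in>UNIV. \<bar>b k i\<bar>)"
      unfolding c2_def by (intro mult_right_mono) (auto intro: sum_nonneg)
    have K: "(\<Sum>i\<in>UNIV. \<Sum>j\<in>UNIV. y k i * Lplus E (a k) i j * zz k j)
     \<ge> W k / 2 + (\<Sum>i\<in>UNIV. b k i * ((zz k i)^2 / 2 - y k i * zz k i))" by (rule key_ineq)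
    show ?thesis using K V1 B1 B2 unfolding zz_def by linarith
  qed
  then have "\<forall>k. (\<Sum>i\<in>UNIV. \<Sum>j\<in>UNIV. y k i * Lplus E (a k) i j * clip qmin qmax (y k j))
       \<ge> c1 * (\<Sum>i\<in>UNIV. (y k i - m)\<^sup>2) - c2 * (\<Sum>i\<in>UNIV. \<bar>b k i\<bar>)" by blast
  with c1p c2p show ?thesis unfolding m_def by (intro exI[of _ c1] exI[of _ c2]) simp
qed

end


theorem lemma9:
  fixes E :: "('n::finite \<times> 'n) set"
    and qmin qmax :: real
    and alpha :: "nat \<Rightarrow> real"
    and a :: "nat \<Rightarrow> 'n \<Rightarrow> 'n \<Rightarrow> real"
    and y x :: "nat \<Rightarrow> 'n \<Rightarrow> real"
  assumes no_loops: "\<forall>i. (i, i) \<notin> E"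
    and strongly_connected: "\<forall>i j. (i, j) \<in> E\<^sup>*"
    and q_lt: "qmin < qmax"
    and avg_range: "qmin \<le> (\<Sum>i\<in>UNIV. y 0 i) / real (card (UNIV :: 'n set))"
                   "(\<Sum>i\<in>UNIV. y 0 i) / real (card (UNIV :: 'n set)) \<le> qmax"
    and alpha_pos: "\<forall>k. alpha k > 0"
    and alpha_noninc: "\<forall>k. alpha (Suc k) \<le> alpha k"
    and alpha_div: "\<not> summable alpha"
    and alpha_sq: "summable (\<lambda>k. (alpha k)\<^sup>2)"
    and a_init: "\<forall>i j. a 0 i j = (if j \<in> in_nbrs E i then 1 else 0)"
    and a_step: "\<forall>k i j. a (Suc k) i j =
        (if j \<in> in_nbrs E i then a k i j + nflag E (a k) k j * gamma k else a k i j)"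
    and x_vals: "\<forall>k i. x k i = qmin \<or> x k i = qmax"
    and x_hi_supp: "\<forall>k i. x k i = qmax \<longrightarrow> prob_hi qmin qmax (y k i) > 0"
    and x_lo_supp: "\<forall>k i. x k i = qmin \<longrightarrow> prob_hi qmin qmax (y k i) < 1"
    and y_step: "\<forall>k i. y (Suc k) i = y k i
        + alpha k * (\<Sum>j\<in>in_nbrs E i. a k i j * (x k j - x k i))
        + alpha k * imbal E (a k) i * x k i"
  shows "\<exists>c1 c2. c1 > 0 \<and> c2 > 0 \<and> (\<forall>k.
     (\<Sum>i\<in>UNIV. \<Sum>j\<in>UNIV. y k i * Lplus E (a k) i j * clip qmin qmax (y k j))
       \<ge> c1 * (\<Sum>i\<in>UNIV. (y k i - (\<Sum>l\<in>UNIV. y 0 l) / real (card (UNIV :: 'n set)))\<^sup>2)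
         - c2 * (\<Sum>i\<in>UNIV. \<bar>imbal E (a k) i\<bar>))"
proof -
  have c1: "CARD('n) \<ge> 1" using card_gt_0_iff[of "UNIV::'n set"] by simp
  show ?thesis
  proof (cases "CARD('n) = 1")
    case False
    have outne: "\<forall>j. out_nbrs E j \<noteq> {}"
    proof
      fix j :: 'n
      have "\<not> CARD('n) \<le> Suc 0" using False c1 by linarith
      then obtain p q :: 'n where pq: "p \<noteq> q" using card_le_Suc0_iff_eq[of "UNIV::'n set"] by auto
      obtain i where ij: "i \<noteq> j" using pq by (cases "p = j") (auto simp: eq_commute)
      have "(j, i) \<in> E\<^sup>*" using strongly_connected by blast
      then obtain u where "(j, u) \<in> E" using ij by (cases rule: converse_rtranclE) auto
      then show "out_nbrs E j \<noteq> {}" unfolding out_nbrs_def by auto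
    qed
    have A: "alg E qmin qmax alpha a y x"
      unfolding alg_def by (intro conjI strongly_connected q_lt avg_range alpha_pos alpha_noninc
          alpha_sq a_init a_step x_vals x_hi_supp x_lo_supp y_step outne)
    show ?thesis by (rule alg.main[OF A])
  next
    case True
    obtain w where U: "UNIV = {w::'n}" using True card_1_singletonE[of "UNIV::'n set"] by auto
    have all_eq: "\<And>i j::'n. i = j" using U by (metis UNIV_I singletonD)
    have E0: "E = {}" using no_loops all_eq by (metis equals0I prod.collapse)
    have nb: "in_nbrs E i = {}" "out_nbrs E i = {}" for i
      unfolding in_nbrs_def out_nbrs_def E0 by auto
    have a0: "a k i j = 0" for k i j
    proof (induction k)
      case 0 then show ?case using a_init nb by simp
    next
      case (Suc k) then show ?case using a_step nb by simp
    qed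
    have imb0: "imbal E (a k) i = 0" for k i
      unfolding imbal_def S_out_def nb by simp
    have yc: "y k i = y 0 i" for k i
    proof (induction k)
      case 0 then show ?case by simp
    next
      case (Suc k) then show ?case using y_step nb imb0 by simp
    qed
    have L0: "Lplus E (a k) i j = 0" for k i j
      unfolding Lplus_def S_out_def nb using a0 by simp
    have m: "(\<Sum>l\<in>UNIV. y 0 l) / real (card (UNIV :: 'n set)) = y 0 w"
      unfolding U by simp
    have V0: "(\<Sum>i\<in>UNIV. (y k i - (\<Sum>l\<in>UNIV. y 0 l) / real (card (UNIV :: 'n set)))\<^sup>2) = 0" for k
      unfolding m U using yc by simp
    show ?thesis
      by (rule exI[of _ 1], rule exI[of _ 1]) (simp add: V0 L0 imb0)
  qed
qed

end
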